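(* Let $\iota:B\to A$ be an injective homomorphism of groups. Then $q\mapsto\mathrm{Ker}(q)=\{a\in A:q(a)=1_B\}$ is a bijection from the set of maps $q:A\to B$ satisfying (ZL1), (ZL2), (ZL3) onto the set $\mathcal C_\iota$ of complements to $\iota(B)$ in $A$. The inverse sends a complement $X$ to the map $q_X$ with $q_X(\iota(b)x)=b$ for $b\in B$, $x\in X$.
   Context: For a homomorphism $\iota:B\to A$, conditions on $q:A\to B$: (ZL1) $q(1_A)=1_B$; (ZL2) $q(\iota(b)a)=b\,q(a)$ for all $a\in A,b\in B$; (ZL3) $q(aa')=q(a\,\iota(q(a')))$ for all $a,a'\in A$. These maps constitute $\mathcal Z^1(\mathsf T^l_\iota,(B,m_B))$, the algebra structures on the left $B$-set $B$ for the monad $A\otimes_B-$ induced by $\iota$. A complement to a subgroup $H$ of $A$ is a subgroup $X$ of $A$ with $HX=A$ and $H\cap X=\{1_A\}$ (so every $a\in A$ is uniquely $a=hx$ with $h\in H,x\in X$). *)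

theory Defs
  imports "HOL-Algebra.Algebra" "HOL-Library.FuncSet"
begin

text \<open>Maps are represented as functions on the carrier of A, extensional
  (undefined outside the carrier), so that equality of maps is equality as
  set-theoretic functions on carrier A.\<close>
definition ZL_maps :: "('b \<Rightarrow> 'a) \<Rightarrow> ('a, 'c) monoid_scheme \<Rightarrow> ('b, 'd) monoid_scheme \<Rightarrow> ('a \<Rightarrow> 'b) set" where
  "ZL_maps iota A B =
     {q \<in> extensional (carrier A) \<inter> (carrier A \<rightarrow> carrier B).
        q \<one>\<^bsub>A\<^esub> = \<one>\<^bsub>B\<^esub>
      \<and> (\<forall>a \<in> carrier A. \<forall>b \<in> carrier B. q (iota b \<otimes>\<^bsub>A\<^esub> a) = b \<otimes>\<^bsub>B\<^esub> q a)
      \<and> (\<forall>a \<in> carrier A. \<forall>a' \<in> carrier A.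
            q (a \<otimes>\<^bsub>A\<^esub> a') = q (a \<otimes>\<^bsub>A\<^esub> iota (q a')))}"

definition ZL_ker :: "('a, 'c) monoid_scheme \<Rightarrow> ('b, 'd) monoid_scheme \<Rightarrow> ('a \<Rightarrow> 'b) \<Rightarrow> 'a set" where
  "ZL_ker A B q = {a \<in> carrier A. q a = \<one>\<^bsub>B\<^esub>}"

definition complements :: "('a, 'c) monoid_scheme \<Rightarrow> 'a set \<Rightarrow> 'a set set" where
  "complements A H =
     {K. subgroup K A \<and> set_mult A H K = carrier A \<and> H \<inter> K = {one A}}"

end

theory Submission
  imports Defs
begin

locale zl = group_hom B A iota for B (structure) and A (structure) and iota +
  assumes inj: "inj_on iota (carrier B)"
begin

lemma iota_car: "b \<in> carrier B \<Longrightarrow> iota b \<in> carrier A"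
  using homh by (auto simp: hom_def)

lemma q_iota:
  assumes q: "q \<in> ZL_maps iota A B" and b: "b \<in> carrier B"
  shows "q (iota b) = b"
proof -
  have "q (iota b \<otimes>\<^bsub>A\<^esub> \<one>\<^bsub>A\<^esub>) = b \<otimes>\<^bsub>B\<^esub> q \<one>\<^bsub>A\<^esub>"
    using q b unfolding ZL_maps_def by blast
  moreover have "q \<one>\<^bsub>A\<^esub> = \<one>\<^bsub>B\<^esub>" using q unfolding ZL_maps_def by blast
  ultimately show ?thesis using b iota_car by simp
qed

lemma q_car: "q \<in> ZL_maps iota A B \<Longrightarrow> a \<in> carrier A \<Longrightarrow> q a \<in> carrier B"
  unfolding ZL_maps_def by auto

lemma decomp:
  assumes q: "q \<in> ZL_maps iota A B" and a: "a \<in> carrier A"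
  shows "inv\<^bsub>A\<^esub> iota (q a) \<otimes>\<^bsub>A\<^esub> a \<in> ZL_ker A B q"
    and "a = iota (q a) \<otimes>\<^bsub>A\<^esub> (inv\<^bsub>A\<^esub> iota (q a) \<otimes>\<^bsub>A\<^esub> a)"
proof -
  have qa: "q a \<in> carrier B" using q_car[OF q a] .
  have "inv\<^bsub>A\<^esub> iota (q a) = iota (inv\<^bsub>B\<^esub> q a)" using qa by simp
  moreover have "q (iota (inv\<^bsub>B\<^esub> q a) \<otimes>\<^bsub>A\<^esub> a) = inv\<^bsub>B\<^esub> q a \<otimes>\<^bsub>B\<^esub> q a"
    using q a qa unfolding ZL_maps_def by auto
  ultimately show "inv\<^bsub>A\<^esub> iota (q a) \<otimes>\<^bsub>A\<^esub> a \<in> ZL_ker A B q"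
    using qa a iota_car unfolding ZL_ker_def by auto
  show "a = iota (q a) \<otimes>\<^bsub>A\<^esub> (inv\<^bsub>A\<^esub> iota (q a) \<otimes>\<^bsub>A\<^esub> a)"
    using qa a iota_car by (simp add: H.m_assoc[symmetric])
qed

lemma ker_compl:
  assumes q: "q \<in> ZL_maps iota A B"
  shows "ZL_ker A B q \<in> complements A (iota ` carrier B)"
proof -
  let ?K = "ZL_ker A B q"
  have one: "q \<one>\<^bsub>A\<^esub> = \<one>\<^bsub>B\<^esub>" using q unfolding ZL_maps_def by blast
  have zl3: "\<And>a a'. a \<in> carrier A \<Longrightarrow> a' \<in> carrier A \<Longrightarrow>
      q (a \<otimes>\<^bsub>A\<^esub> a') = q (a \<otimes>\<^bsub>A\<^esub> iota (q a'))"
    using q unfolding ZL_maps_def by blast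
  have sg: "subgroup ?K A"
  proof
    show "?K \<subseteq> carrier A" unfolding ZL_ker_def by auto
    show "\<one>\<^bsub>A\<^esub> \<in> ?K" using one unfolding ZL_ker_def by auto
  next
    fix x y assume x: "x \<in> ?K" and y: "y \<in> ?K"
    then have xc: "x \<in> carrier A" "q x = \<one>\<^bsub>B\<^esub>" and yc: "y \<in> carrier A" "q y = \<one>\<^bsub>B\<^esub>"
      unfolding ZL_ker_def by auto
    have "q (x \<otimes>\<^bsub>A\<^esub> y) = q (x \<otimes>\<^bsub>A\<^esub> iota (q y))" using zl3 xc yc by blast
    also have "\<dots> = \<one>\<^bsub>B\<^esub>" using xc yc by simp
    finally show "x \<otimes>\<^bsub>A\<^esub> y \<in> ?K" using xc yc unfolding ZL_ker_def by auto
  next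
    fix x assume x: "x \<in> ?K"
    then have xc: "x \<in> carrier A" "q x = \<one>\<^bsub>B\<^esub>" unfolding ZL_ker_def by auto
    have "q (inv\<^bsub>A\<^esub> x \<otimes>\<^bsub>A\<^esub> x) = q (inv\<^bsub>A\<^esub> x \<otimes>\<^bsub>A\<^esub> iota (q x))"
      using zl3 xc by blast
    then have "\<one>\<^bsub>B\<^esub> = q (inv\<^bsub>A\<^esub> x)" using xc one by simp
    then show "inv\<^bsub>A\<^esub> x \<in> ?K" using xc unfolding ZL_ker_def by auto
  qed
  have prod: "set_mult A (iota ` carrier B) ?K = carrier A"
  proof
    show "set_mult A (iota ` carrier B) ?K \<subseteq> carrier A"
      unfolding set_mult_def ZL_ker_def using iota_car by auto
    show "carrier A \<subseteq> set_mult A (iota ` carrier B) ?K"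
    proof
      fix a assume a: "a \<in> carrier A"
      have qa: "q a \<in> carrier B" using q_car[OF q a] .
      show "a \<in> set_mult A (iota ` carrier B) ?K"
        unfolding set_mult_def using decomp[OF q a] qa by blast
    qed
  qed
  have int: "iota ` carrier B \<inter> ?K = {\<one>\<^bsub>A\<^esub>}"
  proof
    show "iota ` carrier B \<inter> ?K \<subseteq> {\<one>\<^bsub>A\<^esub>}"
    proof
      fix x assume "x \<in> iota ` carrier B \<inter> ?K"
      then obtain b where b: "b \<in> carrier B" "x = iota b" "q (iota b) = \<one>\<^bsub>B\<^esub>"
        unfolding ZL_ker_def by auto
      then have "b = \<one>\<^bsub>B\<^esub>" using q_iota[OF q] by simp
      then show "x \<in> {\<one>\<^bsub>A\<^esub>}" using b by simp
    qed
    show "{\<one>\<^bsub>A\<^esub>} \<subseteq> iota ` carrier B \<inter> ?K"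
      using one unfolding ZL_ker_def by (auto intro: image_eqI[where x="\<one>\<^bsub>B\<^esub>"])
  qed
  show ?thesis unfolding complements_def using sg prod int by blast
qed

lemma ker_inj: "inj_on (ZL_ker A B) (ZL_maps iota A B)"
proof
  fix q q' assume q: "q \<in> ZL_maps iota A B" and q': "q' \<in> ZL_maps iota A B"
    and eq: "ZL_ker A B q = ZL_ker A B q'"
  show "q = q'"
  proof (rule extensionalityI)
    show "q \<in> extensional (carrier A)" "q' \<in> extensional (carrier A)"
      using q q' unfolding ZL_maps_def by auto
  next
    fix a assume a: "a \<in> carrier A"
    let ?k = "inv\<^bsub>A\<^esub> iota (q a) \<otimes>\<^bsub>A\<^esub> a"
    have k: "?k \<in> ZL_ker A B q'" using decomp[OF q a] eq by simp
    then have kc: "?k \<in> carrier A" "q' ?k = \<one>\<^bsub>B\<^esub>" unfolding ZL_ker_def by auto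
    have qa: "q a \<in> carrier B" using q_car[OF q a] .
    have "q' a = q' (iota (q a) \<otimes>\<^bsub>A\<^esub> ?k)" using decomp(2)[OF q a] by simp
    also have "\<dots> = q a \<otimes>\<^bsub>B\<^esub> q' ?k" using q' qa kc unfolding ZL_maps_def by blast
    finally show "q a = q' a" using kc qa by simp
  qed
qed

definition qK where
  "qK K a = (if a \<in> carrier A then THE b. b \<in> carrier B \<and> (\<exists>k\<in>K. a = iota b \<otimes>\<^bsub>A\<^esub> k) else undefined)"

lemma uniq:
  assumes K: "K \<in> complements A (iota ` carrier B)"
    and b: "b \<in> carrier B" "b' \<in> carrier B" and k: "k \<in> K" "k' \<in> K"
    and e: "iota b \<otimes>\<^bsub>A\<^esub> k = iota b' \<otimes>\<^bsub>A\<^esub> k'"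
  shows "b = b'"
proof -
  have sg: "subgroup K A" and int: "iota ` carrier B \<inter> K = {\<one>\<^bsub>A\<^esub>}"
    using K unfolding complements_def by auto
  have kc: "k \<in> carrier A" "k' \<in> carrier A" using sg k subgroup.subset by blast+
  have ic: "iota b \<in> carrier A" "iota b' \<in> carrier A" using b iota_car by auto
  have "inv\<^bsub>A\<^esub> iota b' \<otimes>\<^bsub>A\<^esub> iota b = k' \<otimes>\<^bsub>A\<^esub> inv\<^bsub>A\<^esub> k"
  proof -
    have "inv\<^bsub>A\<^esub> iota b' \<otimes>\<^bsub>A\<^esub> (iota b \<otimes>\<^bsub>A\<^esub> k) \<otimes>\<^bsub>A\<^esub> inv\<^bsub>A\<^esub> k
        = inv\<^bsub>A\<^esub> iota b' \<otimes>\<^bsub>A\<^esub> (iota b' \<otimes>\<^bsub>A\<^esub> k') \<otimes>\<^bsub>A\<^esub> inv\<^bsub>A\<^esub> k" using e by simp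
    then have "inv\<^bsub>A\<^esub> iota b' \<otimes>\<^bsub>A\<^esub> iota b \<otimes>\<^bsub>A\<^esub> k \<otimes>\<^bsub>A\<^esub> inv\<^bsub>A\<^esub> k = k' \<otimes>\<^bsub>A\<^esub> inv\<^bsub>A\<^esub> k"
      using kc ic by (simp add: H.m_assoc[symmetric])
    then show ?thesis using kc ic by (simp add: H.m_assoc)
  qed
  moreover have "inv\<^bsub>A\<^esub> iota b' \<otimes>\<^bsub>A\<^esub> iota b = iota (inv\<^bsub>B\<^esub> b' \<otimes>\<^bsub>B\<^esub> b)"
    using b by simp
  moreover have "k' \<otimes>\<^bsub>A\<^esub> inv\<^bsub>A\<^esub> k \<in> K" using sg k subgroup.m_closed subgroup.m_inv_closed by metis
  ultimately have "iota (inv\<^bsub>B\<^esub> b' \<otimes>\<^bsub>B\<^esub> b) = \<one>\<^bsub>A\<^esub>"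
    using int b by (metis (no_types, lifting) G.inv_closed G.m_closed IntI image_eqI singletonD)
  then have "iota (inv\<^bsub>B\<^esub> b' \<otimes>\<^bsub>B\<^esub> b) = iota \<one>\<^bsub>B\<^esub>" by simp
  then have "inv\<^bsub>B\<^esub> b' \<otimes>\<^bsub>B\<^esub> b = \<one>\<^bsub>B\<^esub>" using inj b by (meson G.inv_closed G.m_closed G.one_closed inj_onD)
  then show ?thesis using b by (metis G.inv_equality G.inv_inv G.inv_closed)
qed

lemma qK_eq:
  assumes K: "K \<in> complements A (iota ` carrier B)"
    and b: "b \<in> carrier B" and k: "k \<in> K"
  shows "qK K (iota b \<otimes>\<^bsub>A\<^esub> k) = b"
proof -
  have sg: "subgroup K A" using K unfolding complements_def by auto
  have kc: "k \<in> carrier A" using sg k subgroup.subset by blast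
  have "(THE b'. b' \<in> carrier B \<and> (\<exists>k'\<in>K. iota b \<otimes>\<^bsub>A\<^esub> k = iota b' \<otimes>\<^bsub>A\<^esub> k')) = b"
    by (rule the_equality) (use b k uniq[OF K] in auto)
  then show ?thesis unfolding qK_def using b kc iota_car by simp
qed

lemma exK:
  assumes K: "K \<in> complements A (iota ` carrier B)" and a: "a \<in> carrier A"
  shows "\<exists>b\<in>carrier B. \<exists>k\<in>K. a = iota b \<otimes>\<^bsub>A\<^esub> k"
proof -
  have "set_mult A (iota ` carrier B) K = carrier A" using K unfolding complements_def by auto
  then have "a \<in> (\<Union>x\<in>carrier B. \<Union>k\<in>K. {iota x \<otimes>\<^bsub>A\<^esub> k})"
    using a unfolding set_mult_def by simp
  then obtain x k where "x \<in> carrier B" "k \<in> K" "a \<in> {iota x \<otimes>\<^bsub>A\<^esub> k}"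
    by (elim UN_E)
  then show ?thesis by blast
qed

lemma qK_maps:
  assumes K: "K \<in> complements A (iota ` carrier B)"
  shows "qK K \<in> ZL_maps iota A B" and "ZL_ker A B (qK K) = K"
proof -
  have sg: "subgroup K A" using K unfolding complements_def by auto
  have kc: "\<And>k. k \<in> K \<Longrightarrow> k \<in> carrier A" using sg subgroup.subset by blast
  have car: "\<And>a. a \<in> carrier A \<Longrightarrow> qK K a \<in> carrier B"
    using exK[OF K] qK_eq[OF K] by metis
  have ext: "qK K \<in> extensional (carrier A)" unfolding qK_def extensional_def by auto
  have one: "qK K \<one>\<^bsub>A\<^esub> = \<one>\<^bsub>B\<^esub>"
    using qK_eq[OF K G.one_closed subgroup.one_closed[OF sg]] by simp
  have zl2: "\<forall>a \<in> carrier A. \<forall>b \<in> carrier B. qK K (iota b \<otimes>\<^bsub>A\<^esub> a) = b \<otimes>\<^bsub>B\<^esub> qK K a"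
  proof (intro ballI)
    fix a b assume a: "a \<in> carrier A" and b: "b \<in> carrier B"
    obtain c k where c: "c \<in> carrier B" "k \<in> K" "a = iota c \<otimes>\<^bsub>A\<^esub> k" using exK[OF K a] by blast
    have "iota b \<otimes>\<^bsub>A\<^esub> a = iota (b \<otimes>\<^bsub>B\<^esub> c) \<otimes>\<^bsub>A\<^esub> k"
      using c(3) H.m_assoc[OF iota_car[OF b] iota_car[OF c(1)] kc[OF c(2)]] b c(1) by simp
    then have "qK K (iota b \<otimes>\<^bsub>A\<^esub> a) = b \<otimes>\<^bsub>B\<^esub> c"
      using qK_eq[OF K, of "b \<otimes>\<^bsub>B\<^esub> c" k] c b by (metis G.m_closed)
    then show "qK K (iota b \<otimes>\<^bsub>A\<^esub> a) = b \<otimes>\<^bsub>B\<^esub> qK K a"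
      using qK_eq[OF K] c by simp
  qed
  have right: "\<And>y k. y \<in> carrier A \<Longrightarrow> k \<in> K \<Longrightarrow> qK K (y \<otimes>\<^bsub>A\<^esub> k) = qK K y"
  proof -
    fix y k assume y: "y \<in> carrier A" and k: "k \<in> K"
    obtain d m where d: "d \<in> carrier B" "m \<in> K" "y = iota d \<otimes>\<^bsub>A\<^esub> m" using exK[OF K y] by blast
    have "y \<otimes>\<^bsub>A\<^esub> k = iota d \<otimes>\<^bsub>A\<^esub> (m \<otimes>\<^bsub>A\<^esub> k)"
      using d(3) H.m_assoc[OF iota_car[OF d(1)] kc[OF d(2)] kc[OF k]] by simp
    moreover have "m \<otimes>\<^bsub>A\<^esub> k \<in> K" using subgroup.m_closed[OF sg d(2) k] .
    ultimately show "qK K (y \<otimes>\<^bsub>A\<^esub> k) = qK K y" using qK_eq[OF K] d by simp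
  qed
  have zl3: "\<forall>a \<in> carrier A. \<forall>a' \<in> carrier A.
            qK K (a \<otimes>\<^bsub>A\<^esub> a') = qK K (a \<otimes>\<^bsub>A\<^esub> iota (qK K a'))"
  proof (intro ballI)
    fix a a' assume a: "a \<in> carrier A" and a': "a' \<in> carrier A"
    obtain c k where c: "c \<in> carrier B" "k \<in> K" "a' = iota c \<otimes>\<^bsub>A\<^esub> k" using exK[OF K a'] by blast
    have q': "qK K a' = c" using qK_eq[OF K] c by simp
    have "a \<otimes>\<^bsub>A\<^esub> a' = (a \<otimes>\<^bsub>A\<^esub> iota c) \<otimes>\<^bsub>A\<^esub> k"
      using c(3) H.m_assoc[OF a iota_car[OF c(1)] kc[OF c(2)]] by simp
    then show "qK K (a \<otimes>\<^bsub>A\<^esub> a') = qK K (a \<otimes>\<^bsub>A\<^esub> iota (qK K a'))"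
      using right[of "a \<otimes>\<^bsub>A\<^esub> iota c" k] a c q' iota_car by simp
  qed
  show "qK K \<in> ZL_maps iota A B" unfolding ZL_maps_def using ext car one zl2 zl3 by blast
  show "ZL_ker A B (qK K) = K"
  proof
    show "K \<subseteq> ZL_ker A B (qK K)" unfolding ZL_ker_def
    proof
      fix k assume k: "k \<in> K"
      have "qK K (iota \<one>\<^bsub>B\<^esub> \<otimes>\<^bsub>A\<^esub> k) = \<one>\<^bsub>B\<^esub>" using qK_eq[OF K G.one_closed k] .
      then show "k \<in> {a \<in> carrier A. qK K a = \<one>\<^bsub>B\<^esub>}" using kc[OF k] by simp
    qed
    show "ZL_ker A B (qK K) \<subseteq> K" unfolding ZL_ker_def
    proof
      fix a assume "a \<in> {a \<in> carrier A. qK K a = \<one>\<^bsub>B\<^esub>}"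
      then have a: "a \<in> carrier A" "qK K a = \<one>\<^bsub>B\<^esub>" by auto
      obtain c k where c: "c \<in> carrier B" "k \<in> K" "a = iota c \<otimes>\<^bsub>A\<^esub> k" using exK[OF K a(1)] by blast
      have "c = \<one>\<^bsub>B\<^esub>" using qK_eq[OF K c(1,2)] c a by simp
      then show "a \<in> K" using c kc by simp
    qed
  qed
qed

end

theorem proposition4p3:
  fixes A :: "('a, 'c) monoid_scheme" and B :: "('b, 'd) monoid_scheme"
    and iota :: "'b \<Rightarrow> 'a"
  assumes "group A" and "group B"
    and "iota \<in> hom B A" and "inj_on iota (carrier B)"
  shows "bij_betw (ZL_ker A B) (ZL_maps iota A B) (complements A (iota ` carrier B))
    \<and> (\<forall>K \<in> complements A (iota ` carrier B).
         \<forall>b \<in> carrier B. \<forall>x \<in> K.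
           the_inv_into (ZL_maps iota A B) (ZL_ker A B) K (iota b \<otimes>\<^bsub>A\<^esub> x) = b)"
proof -
  interpret zl B A iota
    by (rule zl.intro) (auto simp: group_hom_def group_hom_axioms_def zl_axioms_def assms)
  have bij: "bij_betw (ZL_ker A B) (ZL_maps iota A B) (complements A (iota ` carrier B))"
    unfolding bij_betw_def
  proof
    show "inj_on (ZL_ker A B) (ZL_maps iota A B)" by (rule ker_inj)
    show "ZL_ker A B ` ZL_maps iota A B = complements A (iota ` carrier B)"
    proof
      show "ZL_ker A B ` ZL_maps iota A B \<subseteq> complements A (iota ` carrier B)"
        using ker_compl by blast
      show "complements A (iota ` carrier B) \<subseteq> ZL_ker A B ` ZL_maps iota A B"
        using qK_maps by (metis image_eqI subsetI)
    qed
  qed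
  moreover have "\<forall>K \<in> complements A (iota ` carrier B).
         \<forall>b \<in> carrier B. \<forall>x \<in> K.
           the_inv_into (ZL_maps iota A B) (ZL_ker A B) K (iota b \<otimes>\<^bsub>A\<^esub> x) = b"
  proof (intro ballI)
    fix K b x assume K: "K \<in> complements A (iota ` carrier B)" and b: "b \<in> carrier B" and x: "x \<in> K"
    have "the_inv_into (ZL_maps iota A B) (ZL_ker A B) K = qK K"
      using the_inv_into_f_eq[OF ker_inj qK_maps(2)[OF K] qK_maps(1)[OF K]] by simp
    then show "the_inv_into (ZL_maps iota A B) (ZL_ker A B) K (iota b \<otimes>\<^bsub>A\<^esub> x) = b"
      using qK_eq[OF K b x] by simp
  qed
  ultimately show ?thesis by blast
qed

end
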